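(* Let $k<m\le kn$ be positive integers and $I$ a single-category instance with $n$ agents, $m$ goods and cardinality constraint $k$. Let $\mathcal{A}^*=(A^*_1,\dots,A^*_n)$ be a utilitarian-optimal allocation and $R=\{i:|A^*_i|<k\}$, $T=\{i:|A^*_i|=k\}$. If $\sum_{i\in R\cup T}u_i(A^*_i)<1$, then $$\frac{\text{OPT-USW}(I)}{\max_{\mathcal{A}\in \mathcal{C}_k(I)}\text{USW}(\mathcal{A})}\le \frac{1+s}{1+\frac{ks^2}{m-1}},\qquad s=-1+\sqrt{1+\frac{m-1}{k}}.$$
   Context: Each agent $i$ has an additive utility function $u_i:2^M\to\mathbb{R}_{\ge 0}$ with $u_i(\emptyset)=0$ and $u_i(M)=1$. An allocation is a partition $(A_1,\dots,A_n)$ of $M$; it is cardinal if $|A_i|\le k$ for all $i$, and $\mathcal{C}_k(I)$ denotes the set of cardinal allocations. $\text{USW}(\mathcal{A})=\sum_i u_i(A_i)$; $\text{OPT-USW}(I)$ is the maximum of $\text{USW}$ over all allocations, attained by a utilitarian-optimal allocation. *)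

theory Defs
  imports Complex_Main
begin

definition bundle_util :: "(nat \<Rightarrow> nat \<Rightarrow> real) \<Rightarrow> nat \<Rightarrow> nat set \<Rightarrow> real" where
  "bundle_util u i S = (\<Sum>g\<in>S. u i g)"

definition is_allocation :: "nat \<Rightarrow> nat \<Rightarrow> (nat \<Rightarrow> nat set) \<Rightarrow> bool" where
  "is_allocation n m A \<longleftrightarrow>
     (\<forall>i<n. A i \<subseteq> {..<m}) \<and>
     (\<forall>i<n. \<forall>j<n. i \<noteq> j \<longrightarrow> A i \<inter> A j = {}) \<and>
     (\<Union>i<n. A i) = {..<m}"

definition is_cardinal :: "nat \<Rightarrow> nat \<Rightarrow> nat \<Rightarrow> (nat \<Rightarrow> nat set) \<Rightarrow> bool" where
  "is_cardinal n m k A \<longleftrightarrow> is_allocation n m A \<and> (\<forall>i<n. card (A i) \<le> k)"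

definition USW :: "nat \<Rightarrow> (nat \<Rightarrow> nat \<Rightarrow> real) \<Rightarrow> (nat \<Rightarrow> nat set) \<Rightarrow> real" where
  "USW n u A = (\<Sum>i<n. bundle_util u i (A i))"

definition OPT_USW :: "nat \<Rightarrow> nat \<Rightarrow> (nat \<Rightarrow> nat \<Rightarrow> real) \<Rightarrow> real" where
  "OPT_USW n m u = Max {USW n u A | A. is_allocation n m A}"

definition MAX_CARD_USW :: "nat \<Rightarrow> nat \<Rightarrow> nat \<Rightarrow> (nat \<Rightarrow> nat \<Rightarrow> real) \<Rightarrow> real" where
  "MAX_CARD_USW n m k u = Max {USW n u A | A. is_cardinal n m k A}"

definition is_util_optimal :: "nat \<Rightarrow> nat \<Rightarrow> (nat \<Rightarrow> nat \<Rightarrow> real) \<Rightarrow> (nat \<Rightarrow> nat set) \<Rightarrow> bool" where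
  "is_util_optimal n m u A \<longleftrightarrow> is_allocation n m A \<and>
     (\<forall>B. is_allocation n m B \<longrightarrow> USW n u B \<le> USW n u A)"

definition valid_instance :: "nat \<Rightarrow> nat \<Rightarrow> (nat \<Rightarrow> nat \<Rightarrow> real) \<Rightarrow> bool" where
  "valid_instance n m u \<longleftrightarrow>
     (\<forall>i<n. \<forall>g<m. u i g \<ge> 0) \<and> (\<forall>i<n. bundle_util u i {..<m} = 1)"

end

theory Submission
  imports Defs
begin


lemma good_subset:
  fixes \<phi> :: "nat \<Rightarrow> real"
  shows "finite A \<Longrightarrow> k \<le> card A \<Longrightarrow> 0 < k \<Longrightarrow>
    \<exists>K\<subseteq>A. card K = k \<and> real k / real (card A) * sum \<phi> A \<le> sum \<phi> K"
proof (induction "card A - k" arbitrary: A)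
  case 0
  then have "card A = k" by simp
  then show ?case using 0 by (intro exI[of _ A]) auto
next
  case (Suc d)
  have ne: "A \<noteq> {}" using Suc by auto
  obtain x where x: "x \<in> A" "\<forall>y\<in>A. \<phi> x \<le> \<phi> y"
  proof -
    define mn where "mn = Min (\<phi> ` A)"
    have "mn \<in> \<phi> ` A" unfolding mn_def using Suc(3) ne by (intro Min_in) auto
    then obtain x where "x \<in> A" "\<phi> x = mn" by auto
    moreover have "\<forall>y\<in>A. mn \<le> \<phi> y" unfolding mn_def using Suc(3) by auto
    ultimately show ?thesis using that by auto
  qed
  define a where "a = card A"
  have a1: "a \<ge> k + 1" using Suc a_def by linarith
  have cA: "card (A - {x}) = a - 1" using x Suc a_def by simp
  have "real a * \<phi> x \<le> sum \<phi> A"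
    using sum_mono[of A "\<lambda>_. \<phi> x" \<phi>] x a_def by simp
  have sA: "sum \<phi> (A - {x}) = sum \<phi> A - \<phi> x" using x Suc(3) by (simp add: sum_diff1)
  have "d = card (A - {x}) - k" using Suc cA a_def by simp
  moreover have fin': "finite (A - {x})" using Suc(3) by simp
  moreover have kle: "k \<le> card (A - {x})" using cA a1 by simp
  ultimately obtain K where K: "K \<subseteq> A - {x}" "card K = k"
     "real k / real (card (A - {x})) * sum \<phi> (A - {x}) \<le> sum \<phi> K"
    using Suc(1) Suc(5) by blast
  have ap: "real a > 1" using a1 Suc(5) by simp
  have "real k / real a * sum \<phi> A \<le> real k / (real a - 1) * (sum \<phi> A - \<phi> x)"
  proof -
    have "sum \<phi> A / real a \<le> (sum \<phi> A - \<phi> x) / (real a - 1)"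
      using \<open>real a * \<phi> x \<le> sum \<phi> A\<close> ap by (simp add: field_simps)
    then have "real k * (sum \<phi> A / real a) \<le> real k * ((sum \<phi> A - \<phi> x) / (real a - 1))"
      by (intro mult_left_mono) auto
    then show ?thesis by simp
  qed
  also have "\<dots> \<le> sum \<phi> K" using K(3) cA sA a1 by (simp add: of_nat_diff)
  finally show ?case using K a_def by auto
qed



lemma sum_upd_minus1:
  fixes s :: "nat \<Rightarrow> nat"
  assumes "finite J" "j \<in> J" "0 < s j"
  shows "(\<Sum>j'\<in>J. (s(j := s j - 1)) j') + 1 = (\<Sum>j'\<in>J. s j')"
proof -
  have "(\<Sum>j'\<in>J. (s(j := s j - 1)) j') = (s j - 1) + (\<Sum>j'\<in>J - {j}. s j')"
    using assms by (simp add: sum.remove)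
  moreover have "(\<Sum>j'\<in>J. s j') = s j + (\<Sum>j'\<in>J - {j}. s j')"
    using assms by (simp add: sum.remove)
  ultimately show ?thesis using assms by simp
qed

lemma distribute:
  fixes u :: "nat \<Rightarrow> nat \<Rightarrow> real" and s :: "nat \<Rightarrow> nat"
  assumes "finite E" "finite J" "card E \<le> (\<Sum>j\<in>J. s j)"
  shows "\<exists>\<sigma>. (\<forall>g\<in>E. \<sigma> g \<in> J) \<and> (\<forall>j\<in>J. card {g\<in>E. \<sigma> g = j} \<le> s j) \<and>
     (\<Sum>j\<in>J. real (s j) * (\<Sum>g\<in>E. u j g)) \<le> real (\<Sum>j\<in>J. s j) * (\<Sum>g\<in>E. u (\<sigma> g) g)"
  using assms
proof (induction E arbitrary: s rule: finite_induct)
  case empty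
  show ?case by (intro exI[of _ "\<lambda>_. undefined"]) simp
next
  case (insert g0 E0 s)
  define C where "C = (\<Sum>j\<in>J. s j)"
  have C1: "card E0 + 1 \<le> C" using insert C_def by simp
  define J' where "J' = {j\<in>J. 0 < s j}"
  define U where "U j = (\<Sum>g\<in>E0. u j g)" for j
  define Z where "Z = (\<Sum>j\<in>J. real (s j) * U j)"
  define G where "G = (\<Sum>j\<in>J. real (s j) * u j g0)"
  have fJ': "finite J'" using insert(4) J'_def by simp
  have IH: "\<forall>j\<in>J'. \<exists>\<sigma>. (\<forall>g\<in>E0. \<sigma> g \<in> J) \<and>
      (\<forall>j'\<in>J. card {g\<in>E0. \<sigma> g = j'} \<le> (s(j := s j - 1)) j') \<and>
      (\<Sum>j'\<in>J. real ((s(j := s j - 1)) j') * U j') \<le> real (C - 1) * (\<Sum>g\<in>E0. u (\<sigma> g) g)"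
  proof
    fix j assume j: "j \<in> J'"
    have e: "(\<Sum>j'\<in>J. (s(j := s j - 1)) j') = C - 1"
      using sum_upd_minus1[of J j s] j J'_def insert(4) C_def by auto
    show "\<exists>\<sigma>. (\<forall>g\<in>E0. \<sigma> g \<in> J) \<and>
      (\<forall>j'\<in>J. card {g\<in>E0. \<sigma> g = j'} \<le> (s(j := s j - 1)) j') \<and>
      (\<Sum>j'\<in>J. real ((s(j := s j - 1)) j') * U j') \<le> real (C - 1) * (\<Sum>g\<in>E0. u (\<sigma> g) g)"
    proof -
      have "card E0 \<le> (\<Sum>j'\<in>J. (s(j := s j - 1)) j')" using C1 e by simp
      from insert.IH[OF insert(4) this] obtain \<sigma> where \<sigma>: "(\<forall>g\<in>E0. \<sigma> g \<in> J) \<and>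
        (\<forall>j'\<in>J. card {g\<in>E0. \<sigma> g = j'} \<le> (s(j := s j - 1)) j') \<and>
        (\<Sum>j'\<in>J. real ((s(j := s j - 1)) j') * (\<Sum>g\<in>E0. u j' g))
          \<le> real (\<Sum>j'\<in>J. (s(j := s j - 1)) j') * (\<Sum>g\<in>E0. u (\<sigma> g) g)"
        by blast
      then have "(\<forall>g\<in>E0. \<sigma> g \<in> J) \<and>
        (\<forall>j'\<in>J. card {g\<in>E0. \<sigma> g = j'} \<le> (s(j := s j - 1)) j') \<and>
        (\<Sum>j'\<in>J. real ((s(j := s j - 1)) j') * U j')
          \<le> real (C - 1) * (\<Sum>g\<in>E0. u (\<sigma> g) g)"
        unfolding U_def by (simp only: e) simp
      then show ?thesis by blast
    qed
  qed
  then obtain F where F: "\<forall>j\<in>J'. (\<forall>g\<in>E0. F j g \<in> J) \<and>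
      (\<forall>j'\<in>J. card {g\<in>E0. F j g = j'} \<le> (s(j := s j - 1)) j') \<and>
      (\<Sum>j'\<in>J. real ((s(j := s j - 1)) j') * U j') \<le> real (C - 1) * (\<Sum>g\<in>E0. u (F j g) g)"
    by (rule bchoice[elim_format]) blast
  define T where "T j = (\<Sum>g\<in>E0. u (F j g) g)" for j
  have ZU: "Z - U j \<le> real (C - 1) * T j" if j: "j \<in> J'" for j
  proof -
    have "(\<Sum>j'\<in>J. real ((s(j := s j - 1)) j') * U j') =
          (\<Sum>j'\<in>J. real (s j') * U j' - (if j' = j then U j' else 0))"
      using j J'_def by (intro sum.cong) (auto simp: of_nat_diff algebra_simps)
    also have "\<dots> = Z - U j" using j J'_def insert(4)
      by (simp add: sum_subtractf Z_def)
    finally have eq: "(\<Sum>j'\<in>J. real ((s(j := s j - 1)) j') * U j') = Z - U j" .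
    have Fj: "(\<Sum>j'\<in>J. real ((s(j := s j - 1)) j') * U j') \<le> real (C - 1) * T j"
      using bspec[OF F j] unfolding T_def by blast
    show ?thesis using eq Fj by linarith
  qed
  have sJ': "(\<Sum>j\<in>J'. real (s j) * h j) = (\<Sum>j\<in>J. real (s j) * h j)" for h
    using insert(4) J'_def by (intro sum.mono_neutral_left) auto
  have CJ': "(\<Sum>j\<in>J'. real (s j)) = real C"
    using sJ'[of "\<lambda>_. 1"] C_def by simp
  have J'ne: "J' \<noteq> {}"
  proof
    assume "J' = {}"
    then have "\<forall>j\<in>J. s j = 0" using J'_def by auto
    then have "C = 0" using C_def by simp
    then show False using C1 by simp
  qed
  have "\<exists>j\<in>J'. G + Z \<le> real C * (u j g0 + T j)"
  proof (rule ccontr)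
    assume "\<not> ?thesis"
    then have lt: "\<forall>j\<in>J'. real C * (u j g0 + T j) < G + Z" by auto
    have "(\<Sum>j\<in>J'. real (s j) * (real C * (u j g0 + T j))) < (\<Sum>j\<in>J'. real (s j) * (G + Z))"
      using lt fJ' J'ne J'_def by (intro sum_strict_mono) auto
    also have "\<dots> = real C * (G + Z)" using CJ' by (simp only: sum_distrib_right[symmetric])
    finally have "real C * (\<Sum>j\<in>J'. real (s j) * u j g0) + real C * (\<Sum>j\<in>J'. real (s j) * T j)
        < real C * (G + Z)"
      by (simp add: sum_distrib_left sum.distrib algebra_simps)
    then have lt2: "(\<Sum>j\<in>J'. real (s j) * T j) < Z"
      using sJ'[of "\<lambda>j. u j g0"] G_def C1 by (simp add: algebra_simps)
    show False
    proof (cases "E0 = {}")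
      case True
      then have "T j = 0" "U j = 0" for j using T_def U_def by auto
      then show False using lt2 Z_def by simp
    next
      case False
      then have "card E0 > 0" using insert(1) by (simp add: card_gt_0_iff)
      then have Cg: "real C - 1 > 0" using C1 by simp
      have "(\<Sum>j\<in>J'. real (s j) * (Z - U j)) \<le> (\<Sum>j\<in>J'. real (s j) * (real (C - 1) * T j))"
        using ZU by (intro sum_mono mult_left_mono) auto
      moreover have "(\<Sum>j\<in>J'. real (s j) * (Z - U j)) = real C * Z - Z"
      proof -
        have "(\<Sum>j\<in>J'. real (s j) * (Z - U j)) = (\<Sum>j\<in>J'. real (s j)) * Z - (\<Sum>j\<in>J'. real (s j) * U j)"
          by (simp add: right_diff_distrib sum_subtractf sum_distrib_right)
        moreover have "(\<Sum>j\<in>J'. real (s j) * U j) = Z" using sJ'[of U] Z_def by simp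
        ultimately show ?thesis using CJ' by simp
      qed
      moreover have "(\<Sum>j\<in>J'. real (s j) * (real (C - 1) * T j)) =
          (real C - 1) * (\<Sum>j\<in>J'. real (s j) * T j)"
        using C1 by (simp add: sum_distrib_left of_nat_diff algebra_simps)
      ultimately have "(real C - 1) * Z \<le> (real C - 1) * (\<Sum>j\<in>J'. real (s j) * T j)"
        by (simp add: algebra_simps)
      then have "Z \<le> (\<Sum>j\<in>J'. real (s j) * T j)" using Cg by simp
      then show False using lt2 by simp
    qed
  qed
  then obtain j where j: "j \<in> J'" and jv: "G + Z \<le> real C * (u j g0 + T j)" by blast
  define \<sigma> where "\<sigma> = (F j)(g0 := j)"
  have jJ: "j \<in> J" "0 < s j" using j J'_def by auto
  have s1: "\<forall>g\<in>insert g0 E0. \<sigma> g \<in> J" using F j jJ \<sigma>_def by auto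
  have s2: "card {g\<in>insert g0 E0. \<sigma> g = j'} \<le> s j'" if j': "j' \<in> J" for j'
  proof (cases "j' = j")
    case True
    have "{g\<in>insert g0 E0. \<sigma> g = j'} = insert g0 {g\<in>E0. F j g = j}"
      using True \<sigma>_def insert(2) by auto
    moreover have "card (insert g0 {g\<in>E0. F j g = j}) = Suc (card {g\<in>E0. F j g = j})"
      using insert(1,2) by simp
    moreover have "card {g\<in>E0. F j g = j} \<le> s j - 1" using F j jJ by fastforce
    ultimately show ?thesis using True jJ by simp
  next
    case False
    have "{g\<in>insert g0 E0. \<sigma> g = j'} = {g\<in>E0. F j g = j'}"
      using False \<sigma>_def insert(2) by auto
    moreover have "card {g\<in>E0. F j g = j'} \<le> s j'" using F j j' False by fastforce
    ultimately show ?thesis by simp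
  qed
  have v1: "(\<Sum>g\<in>insert g0 E0. u (\<sigma> g) g) = u j g0 + T j"
    using insert(1,2) \<sigma>_def T_def by (auto intro!: sum.cong)
  have v2: "(\<Sum>j\<in>J. real (s j) * (\<Sum>g\<in>insert g0 E0. u j g)) = G + Z"
    using insert(1,2) G_def Z_def U_def by (simp add: algebra_simps sum.distrib)
  show ?case using s1 s2 v1 v2 jv C_def by (intro exI[of _ \<sigma>]) auto
qed



lemma alloc_facts:
  assumes "is_allocation n m A"
  shows "\<forall>i<n. A i \<subseteq> {..<m}" "\<forall>i<n. finite (A i)"
    "\<forall>i<n. \<forall>j<n. i \<noteq> j \<longrightarrow> A i \<inter> A j = {}" "(\<Union>i<n. A i) = {..<m}"
  using assms unfolding is_allocation_def by (auto intro: finite_subset)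

lemma alloc_sum:
  assumes "is_allocation n m A"
  shows "(\<Sum>i<n. bundle_util u j (A i)) = bundle_util u j {..<m}"
proof -
  note f = alloc_facts[OF assms]
  have "bundle_util u j {..<m} = sum (u j) (\<Union>i<n. A i)" using f(4) bundle_util_def by simp
  also have "\<dots> = (\<Sum>i<n. sum (u j) (A i))"
    using f(2,3) by (intro sum.UNION_disjoint) auto
  finally show ?thesis unfolding bundle_util_def by simp
qed

lemma alloc_card:
  assumes "is_allocation n m A"
  shows "(\<Sum>i<n. card (A i)) = m"
proof -
  note f = alloc_facts[OF assms]
  have "m = card (\<Union>i<n. A i)" using f(4) by simp
  also have "\<dots> = (\<Sum>i<n. card (A i))"
    using f(2,3) by (intro card_UN_disjoint) auto
  finally show ?thesis by simp
qed

lemma dominance: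
  assumes opt: "is_util_optimal n m u A" and i: "i < n" and j: "j < n" and g: "g \<in> A i"
  shows "u j g \<le> u i g"
proof (cases "i = j")
  case True then show ?thesis by simp
next
  case False
  have al: "is_allocation n m A" using opt is_util_optimal_def by simp
  note f = alloc_facts[OF al]
  have gj: "g \<notin> A j" using f(3) i j False g by blast
  have gm: "g < m" using f(1) i g by blast
  define B where "B = A(i := A i - {g}, j := insert g (A j))"
  have Bi: "B i = A i - {g}" using False B_def by simp
  have Bj: "B j = insert g (A j)" using B_def by simp
  have Bl: "B l = A l" if "l \<noteq> i" "l \<noteq> j" for l using that B_def by simp
  have alB: "is_allocation n m B"
  proof -
    have s1: "\<forall>l<n. B l \<subseteq> {..<m}" 
    proof (intro allI impI)
      fix l assume l: "l < n"
      show "B l \<subseteq> {..<m}"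
      proof (cases "l = j")
        case True
        have "A j \<subseteq> {..<m}" using f(1) j by simp
        then show ?thesis using True Bj gm by simp
      next
        case False
        have "A l \<subseteq> {..<m}" using f(1) l by simp
        then show ?thesis using False Bi Bl by (cases "l = i") auto
      qed
    qed
    have sub: "B l \<subseteq> insert g (A l)" for l using Bi Bj Bl by (cases "l = i"; cases "l = j") auto
    have gB: "l = j" if "l < n" "g \<in> B l" for l
    proof (rule ccontr)
      assume lj: "l \<noteq> j"
      show False
      proof (cases "l = i")
        case True then show False using that Bi by simp
      next
        case False
        then have "g \<in> A l" using that Bl lj by simp
        then show False using f(3) that(1) i g False by blast
      qed
    qed
    have s2: "\<forall>l<n. \<forall>l'<n. l \<noteq> l' \<longrightarrow> B l \<inter> B l' = {}"
    proof (intro allI impI)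
      fix l l' assume l: "l < n" "l' < n" "l \<noteq> l'"
      show "B l \<inter> B l' = {}"
      proof (rule ccontr)
        assume "B l \<inter> B l' \<noteq> {}"
        then obtain x where x: "x \<in> B l" "x \<in> B l'" by blast
        show False
        proof (cases "x = g")
          case True then show False using gB l x by blast
        next
          case False
          then have "x \<in> A l" "x \<in> A l'" using sub x by blast+
          then show False using f(3) l by blast
        qed
      qed
    qed
    have s3: "(\<Union>l<n. B l) = {..<m}"
    proof
      show "(\<Union>l<n. B l) \<subseteq> {..<m}" using s1 by auto
      show "{..<m} \<subseteq> (\<Union>l<n. B l)"
      proof
        fix x assume "x \<in> {..<m}"
        then obtain l where l: "l < n" "x \<in> A l" using f(4) by auto
        show "x \<in> (\<Union>l<n. B l)"
        proof (cases "x = g")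
          case True then show ?thesis using Bj j by auto
        next
          case False
          then have "x \<in> B l" using l Bi Bj Bl by (cases "l = i"; cases "l = j") auto
          then show ?thesis using l by auto
        qed
      qed
    qed
    show ?thesis unfolding is_allocation_def by (rule conjI[OF s1 conjI[OF s2 s3]])
  qed
  have fi: "finite (A i)" "finite (A j)" using f(2) i j by auto
  have eq: "bundle_util u l (B l) = bundle_util u l (A l) + (if l = j then u j g else 0) - (if l = i then u i g else 0)"
    if "l < n" for l
  proof -
    consider "l = i" | "l = j" | "l \<noteq> i" "l \<noteq> j" by blast
    then show ?thesis
    proof cases
      case 1 then show ?thesis using Bi False g fi unfolding bundle_util_def by (simp add: sum_diff1)
    next
      case 2 then show ?thesis using Bj False gj fi unfolding bundle_util_def by simp
    next
      case 3 then show ?thesis using Bl by simp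
    qed
  qed
  have "USW n u B = (\<Sum>l<n. bundle_util u l (A l) + (if l = j then u j g else 0) - (if l = i then u i g else 0))"
    unfolding USW_def using eq by simp
  also have "\<dots> = USW n u A + u j g - u i g"
    unfolding USW_def using i j by (simp add: sum.distrib sum_subtractf)
  finally have "USW n u B = USW n u A + u j g - u i g" .
  moreover have "\<forall>B. is_allocation n m B \<longrightarrow> USW n u B \<le> USW n u A"
    using opt is_util_optimal_def by simp
  then have "USW n u B \<le> USW n u A" using alB by blast
  ultimately show ?thesis by simp
qed

lemma finite_USW_set:
  "finite {USW n u A | A. is_allocation n m A}"
proof -
  define f where "f xs = (\<Sum>i<n. bundle_util u i (xs ! i))" for xs
  define LS where "LS = {xs. set xs \<subseteq> Pow {..<m} \<and> length xs = n}"
  have "{USW n u A | A. is_allocation n m A} \<subseteq> f ` LS"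
  proof
    fix x assume "x \<in> {USW n u A | A. is_allocation n m A}"
    then obtain A where A: "x = USW n u A" "is_allocation n m A" by blast
    have "\<forall>i<n. A i \<subseteq> {..<m}" using alloc_facts(1)[OF A(2)] .
    then have "set (map A [0..<n]) \<subseteq> Pow {..<m}" by auto
    then have mem: "map A [0..<n] \<in> LS" unfolding LS_def by simp
    have "f (map A [0..<n]) = USW n u A" unfolding USW_def f_def by simp
    then have "x = f (map A [0..<n])" using A(1) by simp
    then show "x \<in> f ` LS" using mem by (rule image_eqI)
  qed
  moreover have "finite LS" unfolding LS_def
    by (rule finite_lists_length_eq) simp
  ultimately show ?thesis by (rule finite_subset[OF _ finite_imageI])
qed

lemma OPT_eq:
  assumes "is_util_optimal n m u A"
  shows "OPT_USW n m u = USW n u A"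
  unfolding OPT_USW_def
proof (rule Max_eqI)
  show "finite {USW n u A | A. is_allocation n m A}" by (rule finite_USW_set)
  have al: "is_allocation n m A" and le: "\<forall>B. is_allocation n m B \<longrightarrow> USW n u B \<le> USW n u A"
    using assms unfolding is_util_optimal_def by simp_all
  show "USW n u A \<in> {USW n u A | A. is_allocation n m A}" using al by blast
  fix y assume "y \<in> {USW n u A | A. is_allocation n m A}"
  then obtain B where "y = USW n u B" "is_allocation n m B" by blast
  then show "y \<le> USW n u A" using le by simp
qed

lemma MAX_CARD_ge:
  assumes "is_cardinal n m k B"
  shows "USW n u B \<le> MAX_CARD_USW n m k u"
proof -
  have "{USW n u A | A. is_cardinal n m k A} \<subseteq> {USW n u A | A. is_allocation n m A}"
    unfolding is_cardinal_def by blast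
  then have fin: "finite {USW n u A | A. is_cardinal n m k A}"
    using finite_USW_set by (rule finite_subset)
  have "USW n u B \<in> {USW n u A | A. is_cardinal n m k A}" using assms by blast
  then show ?thesis unfolding MAX_CARD_USW_def using fin by (rule Max_ge[rotated])
qed



lemma alg_bound:
  fixes L :: "nat set" and v w a :: "nat \<Rightarrow> real" and S N k Q :: real
  assumes fin: "finite L" and S0: "0 \<le> S" and S1: "S < 1"
    and pi: "\<forall>i\<in>L. 0 \<le> w i \<and> w i \<le> v i \<and> v i \<le> 1 \<and> k + 1 \<le> a i"
    and k0: "k > 0" and Wb: "1 - S \<le> (\<Sum>i\<in>L. w i)" and aN: "(\<Sum>i\<in>L. a i) \<le> N"
    and NQ: "N - (k+1)*(1-S) \<le> Q" and Q0: "Q > 0"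
  shows "1 + k * (S + (\<Sum>i\<in>L. v i) - 1)^2 / Q \<le> S + (\<Sum>i\<in>L. (w i + k / a i * (v i - w i)))"
proof -
  define W where "W = (\<Sum>i\<in>L. w i)"
  have W0: "W > 0" using Wb S1 W_def by simp
  define \<theta> where "\<theta> = (1 - S) / W"
  have th0: "0 \<le> \<theta>" using S1 W0 \<theta>_def by simp
  have th1: "\<theta> \<le> 1" using Wb W0 \<theta>_def W_def by simp
  define w' where "w' i = \<theta> * w i" for i
  define y where "y i = v i - w' i" for i
  have w'w: "0 \<le> w' i \<and> w' i \<le> w i" if "i \<in> L" for i
    using pi that th0 th1 w'_def by (simp add: mult_left_le_one_le)
  have sw': "(\<Sum>i\<in>L. w' i) = 1 - S"
  proof -
    have "(\<Sum>i\<in>L. w' i) = \<theta> * W" unfolding w'_def W_def by (simp add: sum_distrib_left)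
    then show ?thesis using W0 \<theta>_def by simp
  qed
  have y0: "0 \<le> y i" if "i \<in> L" for i using w'w[OF that] pi that y_def by force
  have h3: "w' i + k * (y i / a i) \<le> w i + k / a i * (v i - w i)" if i: "i \<in> L" for i
  proof -
    have a0: "a i > 0" using pi i k0 by force
    have "k \<le> a i" using pi i by force
    then have ka: "k / a i \<le> 1" using a0 by simp
    have "w i + k / a i * (v i - w i) - (w' i + k * (y i / a i)) = (w i - w' i) * (1 - k / a i)"
      unfolding y_def using a0 by (simp add: field_simps)
    also have "\<dots> \<ge> 0" using w'w[OF i] ka by simp
    finally show ?thesis by simp
  qed
  define X where "X = S + (\<Sum>i\<in>L. v i) - 1"
  have sy: "(\<Sum>i\<in>L. y i) = X" unfolding y_def X_def using sw' by (simp add: sum_subtractf)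
  define P where "P = (\<Sum>i\<in>L. a i * y i)"
  have PQ: "P \<le> Q"
  proof -
    have "P \<le> (\<Sum>i\<in>L. a i * (1 - w' i))" unfolding P_def y_def
      using pi k0 by (intro sum_mono mult_left_mono) force+
    also have "\<dots> = (\<Sum>i\<in>L. a i) - (\<Sum>i\<in>L. a i * w' i)" by (simp add: algebra_simps sum_subtractf)
    also have "(\<Sum>i\<in>L. a i * w' i) \<ge> (\<Sum>i\<in>L. (k+1) * w' i)"
      using pi w'w by (intro sum_mono mult_right_mono) auto
    then have "(\<Sum>i\<in>L. a i) - (\<Sum>i\<in>L. a i * w' i) \<le> N - (k+1)*(1-S)"
      using aN sw' by (simp add: sum_distrib_left[symmetric])
    finally show ?thesis using NQ by simp
  qed
  define t where "t = X / Q"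
  have yi: "2*t*y i - t^2 * (a i * y i) \<le> y i / a i" if i: "i \<in> L" for i
  proof -
    have a0: "a i > 0" using pi i k0 by force
    have "y i / a i - (2*t*y i - t^2 * (a i * y i)) = y i * (1 - t * a i)^2 / a i"
      using a0 by (simp add: field_simps power2_eq_square)
    also have "\<dots> \<ge> 0" using y0[OF i] a0 by simp
    finally show ?thesis by simp
  qed
  have "(\<Sum>i\<in>L. 2*t*y i - t^2 * (a i * y i)) \<le> (\<Sum>i\<in>L. y i / a i)"
    using yi by (intro sum_mono) auto
  moreover have "(\<Sum>i\<in>L. 2*t*y i - t^2 * (a i * y i)) = 2*t*X - t^2 * P"
    unfolding P_def using sy by (simp add: sum_subtractf sum_distrib_left[symmetric])
  moreover have "t^2 * P \<le> t^2 * Q" using PQ by (simp add: mult_left_mono)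
  moreover have "2*t*X - t^2 * Q = X^2 / Q" unfolding t_def using Q0 by (simp add: field_simps power2_eq_square)
  ultimately have main: "X^2 / Q \<le> (\<Sum>i\<in>L. y i / a i)" by linarith
  have "S + (\<Sum>i\<in>L. (w i + k / a i * (v i - w i))) \<ge> S + (\<Sum>i\<in>L. (w' i + k * (y i / a i)))"
    using h3 by (simp add: sum_mono)
  also have "S + (\<Sum>i\<in>L. (w' i + k * (y i / a i))) = 1 + k * (\<Sum>i\<in>L. y i / a i)"
    using sw' by (simp add: sum.distrib sum_distrib_left)
  finally have "1 + k * (\<Sum>i\<in>L. y i / a i) \<le> S + (\<Sum>i\<in>L. (w i + k / a i * (v i - w i)))" .
  moreover have "k * (X^2 / Q) \<le> k * (\<Sum>i\<in>L. y i / a i)" using main k0 by (intro mult_left_mono) auto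
  ultimately show ?thesis unfolding X_def by simp
qed

lemma ratio_bound:
  fixes k m X Ov c :: real
  assumes k0: "k > 0" and m1: "m - 1 > 0" and Ov: "Ov = 1 + X" "Ov \<ge> 0"
    and c: "c \<ge> 1 + k * X^2 / (m - 1)"
  shows "Ov / c \<le> (let s = -1 + sqrt (1 + (m - 1) / k) in (1 + s) / (1 + k * s^2 / (m - 1)))"
proof -
  define q where "q = k / (m - 1)"
  have q0: "q > 0" using k0 m1 q_def by simp
  define s where "s = -1 + sqrt (1 + (m - 1) / k)"
  have s1: "1 + s = sqrt (1 + (m - 1) / k)" using s_def by simp
  have r0: "1 + (m - 1) / k \<ge> 0" using k0 m1 by simp
  have e1: "(1 + s)^2 = 1 + (m - 1) / k" using s1 r0 by simp
  have "q * (1 + s)^2 = q * (1 + (m - 1) / k)" using e1 by simp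
  also have "\<dots> = q + 1" using q_def k0 m1 by (simp add: field_simps)
  finally have "q * (1 + s)^2 = q + 1" .
  then have key: "q * s^2 + 2 * q * s = 1" by (simp add: power2_eq_square algebra_simps)
  have sp: "1 + s \<ge> 1" using s1 k0 m1 by simp
  have kq: "k * z^2 / (m - 1) = q * z^2" for z using q_def by simp
  have cpos: "1 + q * X^2 > 0" using q0 by (simp add: add_pos_nonneg)
  have "Ov / c \<le> Ov / (1 + q * X^2)"
    using Ov c cpos kq by (intro divide_left_mono) (auto simp: mult_pos_pos)
  also have "\<dots> \<le> (1 + s) / (1 + q * s^2)"
  proof -
    have "(1 + s) * (1 + q * X^2) - (1 + X) * (1 + q * s^2)
        = q * (1 + s) * (X - s)^2 + (s - X) * (1 - (q * s^2 + 2 * q * s))"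
      by (simp add: power2_eq_square algebra_simps)
    also have "\<dots> = q * (1 + s) * (X - s)^2" using key by simp
    also have "\<dots> \<ge> 0" using q0 sp by simp
    finally have "(1 + X) * (1 + q * s^2) \<le> (1 + s) * (1 + q * X^2)" by simp
    moreover have "1 + q * s^2 > 0" using q0 by (simp add: add_pos_nonneg)
    ultimately show ?thesis using cpos Ov by (simp add: divide_le_eq le_divide_eq mult.commute)
  qed
  finally show ?thesis unfolding s_def Let_def using kq by simp
qed



theorem lemma5:
  fixes n m k :: nat and u :: "nat \<Rightarrow> nat \<Rightarrow> real" and Astar :: "nat \<Rightarrow> nat set"
  assumes "0 < n" "0 < k" "k < m" "m \<le> k * n"
    and "valid_instance n m u"
    and "is_util_optimal n m u Astar"
    and "(\<Sum>i\<in>{i. i < n \<and> card (Astar i) < k} \<union> {i. i < n \<and> card (Astar i) = k}.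
            bundle_util u i (Astar i)) < 1"
  shows "OPT_USW n m u / MAX_CARD_USW n m k u
         \<le> (let s = -1 + sqrt (1 + (real m - 1) / real k)
            in (1 + s) / (1 + real k * s\<^sup>2 / (real m - 1)))"
proof -
  note n0 = assms(1) and k0 = assms(2) and km = assms(3) and mkn = assms(4)
    and vi = assms(5) and opt = assms(6)
  define A where "A = Astar"
  have al: "is_allocation n m A" using opt A_def is_util_optimal_def by simp
  note f = alloc_facts[OF al]
  have unn: "\<forall>i<n. \<forall>g<m. 0 \<le> u i g" using vi valid_instance_def by simp
  have u1: "\<forall>i<n. bundle_util u i {..<m} = 1" using vi valid_instance_def by simp
  have dom: "\<And>i j g. i < n \<Longrightarrow> j < n \<Longrightarrow> g \<in> A i \<Longrightarrow> u j g \<le> u i g"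
    using dominance[OF opt] A_def by blast
  have Am: "\<And>i g. i < n \<Longrightarrow> g \<in> A i \<Longrightarrow> g < m" using f(1) by blast
  define L where "L = {i. i < n \<and> k < card (A i)}"
  define RT where "RT = {i. i < n \<and> card (A i) \<le> k}"
  have RTeq: "{i. i < n \<and> card (Astar i) < k} \<union> {i. i < n \<and> card (Astar i) = k} = RT"
    unfolding RT_def A_def by auto
  define S where "S = (\<Sum>i\<in>RT. bundle_util u i (A i))"
  have S1: "S < 1" using assms(7) RTeq S_def A_def by simp
  have finL: "finite L" "finite RT" unfolding L_def RT_def by auto
  have LRT: "L \<union> RT = {..<n}" "L \<inter> RT = {}" unfolding L_def RT_def by auto
  have split: "(\<Sum>i<n. h i) = (\<Sum>i\<in>L. h i) + (\<Sum>i\<in>RT. h i)" for h :: "nat \<Rightarrow> 'b::comm_monoid_add"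
    using LRT finL by (metis sum.union_disjoint)
  have bnn: "0 \<le> bundle_util u j (A i)" if "j < n" "i < n" for i j
    unfolding bundle_util_def using unn that Am by (intro sum_nonneg) auto
  have S0: "0 \<le> S" unfolding S_def using bnn RT_def by (intro sum_nonneg) auto
  define v where "v i = bundle_util u i (A i)" for i
  have USWA: "USW n u A = S + (\<Sum>i\<in>L. v i)"
    unfolding USW_def S_def v_def using split[of "\<lambda>i. bundle_util u i (A i)"] by simp
  have OPTeq: "OPT_USW n m u = S + (\<Sum>i\<in>L. v i)"
    using OPT_eq[OF opt] USWA A_def by simp
  have OPT1: "USW n u A \<ge> 1"
  proof -
    have "(\<Sum>i<n. bundle_util u 0 (A i)) \<le> (\<Sum>i<n. bundle_util u i (A i))"
      unfolding bundle_util_def using dom n0 by (intro sum_mono) auto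
    then show ?thesis using alloc_sum[OF al] u1 n0 unfolding USW_def by simp
  qed
  have Lne: "L \<noteq> {}"
  proof
    assume "L = {}"
    then show False using USWA OPT1 S1 by simp
  qed

  define a where "a i = card (A i)" for i
  define s where "s j = k - card (A j)" for j
  define C where "C = (\<Sum>j\<in>RT. s j)"
  have cardsum: "(\<Sum>i\<in>L. a i) + (\<Sum>i\<in>RT. a i) = m"
    using alloc_card[OF al] split[of a] a_def by simp
  have Lgt: "\<forall>i\<in>L. k < a i" using L_def a_def by auto
  have RTle: "\<forall>i\<in>RT. a i \<le> k" using RT_def a_def by auto
  have eqL: "(\<Sum>i\<in>L. a i) = (\<Sum>i\<in>L. a i - k) + k * card L"
  proof -
    have "(\<Sum>i\<in>L. a i) = (\<Sum>i\<in>L. (a i - k) + k)" using Lgt by (intro sum.cong) auto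
    then show ?thesis by (simp add: sum.distrib)
  qed
  have eqR: "C + (\<Sum>i\<in>RT. a i) = k * card RT"
  proof -
    have "C + (\<Sum>i\<in>RT. a i) = (\<Sum>i\<in>RT. (k - a i) + a i)" unfolding C_def s_def a_def
      by (simp add: sum.distrib)
    also have "\<dots> = (\<Sum>i\<in>RT. k)" using RTle by (intro sum.cong) auto
    finally show ?thesis by simp
  qed
  have cardn: "card L + card RT = n" using LRT finL by (metis card_Un_disjoint card_lessThan)
  have kn: "k * n = k * card L + k * card RT" using cardn by (metis add_mult_distrib2)
  have capacity: "(\<Sum>i\<in>L. a i - k) \<le> C" using cardsum eqL eqR kn mkn by linarith
  have Cpos: "0 < C"
  proof -
    obtain i where i: "i \<in> L" using Lne by blast
    have "a i - k \<le> (\<Sum>i\<in>L. a i - k)" using i finL by (intro member_le_sum) auto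
    then show ?thesis using Lgt i capacity by fastforce
  qed
  have Cr: "real C > 0" using Cpos by simp
  define \<omega> where "\<omega> g = (\<Sum>j\<in>RT. real (s j) * u j g) / real C" for g
  have \<omega>le: "\<omega> g \<le> u i g" if i: "i < n" "g \<in> A i" for i g
  proof -
    have "(\<Sum>j\<in>RT. real (s j) * u j g) \<le> (\<Sum>j\<in>RT. real (s j) * u i g)"
      using dom i RT_def by (intro sum_mono mult_left_mono) auto
    also have "\<dots> = real C * u i g" unfolding C_def by (simp add: sum_distrib_right)
    finally show ?thesis unfolding \<omega>_def using Cr by (simp add: divide_le_eq mult.commute)
  qed
  have \<omega>0: "0 \<le> \<omega> g" if "g < m" for g
    unfolding \<omega>_def using unn that RT_def Cr by (intro divide_nonneg_pos sum_nonneg) auto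
  have "\<forall>i\<in>L. \<exists>K. K \<subseteq> A i \<and> card K = k \<and>
      real k / real (card (A i)) * sum (\<lambda>g. u i g - \<omega> g) (A i) \<le> sum (\<lambda>g. u i g - \<omega> g) K"
  proof
    fix i assume i: "i \<in> L"
    show "\<exists>K. K \<subseteq> A i \<and> card K = k \<and>
      real k / real (card (A i)) * sum (\<lambda>g. u i g - \<omega> g) (A i) \<le> sum (\<lambda>g. u i g - \<omega> g) K"
      using good_subset[of "A i" k "\<lambda>g. u i g - \<omega> g"] f(2) i L_def k0 by auto
  qed
  then obtain K where K: "\<forall>i\<in>L. K i \<subseteq> A i \<and> card (K i) = k \<and>
      real k / real (card (A i)) * sum (\<lambda>g. u i g - \<omega> g) (A i) \<le> sum (\<lambda>g. u i g - \<omega> g) (K i)"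
    by (rule bchoice[elim_format]) blast
  have finA: "\<And>i. i < n \<Longrightarrow> finite (A i)" using f(2) by blast
  have disjA: "\<And>i j. i < n \<Longrightarrow> j < n \<Longrightarrow> i \<noteq> j \<Longrightarrow> A i \<inter> A j = {}" using f(3) by blast
  have Ln: "\<And>i. i \<in> L \<Longrightarrow> i < n" "\<And>i. i \<in> RT \<Longrightarrow> i < n" using L_def RT_def by auto
  have disjL: "\<forall>i\<in>L. \<forall>j\<in>L. i \<noteq> j \<longrightarrow> (A i - K i) \<inter> (A j - K j) = {}"
  proof (intro ballI impI)
    fix i j assume "i \<in> L" "j \<in> L" "i \<noteq> j"
    then have "A i \<inter> A j = {}" using disjA Ln by simp
    then show "(A i - K i) \<inter> (A j - K j) = {}" by blast
  qed
  define E where "E = (\<Union>i\<in>L. A i - K i)"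
  have finE: "finite E" unfolding E_def using finL finA Ln by auto
  have cardE: "card E = (\<Sum>i\<in>L. a i - k)"
  proof -
    have "card E = (\<Sum>i\<in>L. card (A i - K i))" unfolding E_def
      using finL finA Ln disjL by (intro card_UN_disjoint) auto
    also have "\<dots> = (\<Sum>i\<in>L. a i - k)"
      using K finA Ln a_def by (intro sum.cong) (auto simp: card_Diff_subset finite_subset)
    finally show ?thesis .
  qed
  obtain \<sigma> where \<sigma>: "\<forall>g\<in>E. \<sigma> g \<in> RT" "\<forall>j\<in>RT. card {g\<in>E. \<sigma> g = j} \<le> s j"
    "(\<Sum>j\<in>RT. real (s j) * (\<Sum>g\<in>E. u j g)) \<le> real (\<Sum>j\<in>RT. s j) * (\<Sum>g\<in>E. u (\<sigma> g) g)"
    using distribute[of E RT s u] finE finL cardE capacity C_def by auto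

  define P where "P j = {g\<in>E. \<sigma> g = j}" for j
  define B where "B i = (if i \<in> L then K i else A i \<union> P i)" for i
  have EA: "\<exists>l\<in>L. g \<in> A l \<and> g \<notin> K l" if "g \<in> E" for g using that E_def by blast
  have EnotRT: "g \<notin> A j" if gE: "g \<in> E" and jR: "j \<in> RT" for g j
  proof
    assume gj: "g \<in> A j"
    obtain l where l: "l \<in> L" "g \<in> A l" using EA[OF gE] by blast
    have "l \<noteq> j" using l jR LRT by blast
    then show False using disjA[of l j] Ln l jR gj by blast
  qed
  have EnotK: "g \<notin> K i" if gE: "g \<in> E" and iL: "i \<in> L" for g i
  proof
    assume gK: "g \<in> K i"
    obtain l where l: "l \<in> L" "g \<in> A l" "g \<notin> K l" using EA[OF gE] by blast
    have "g \<in> A i" using gK K iL by blast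
    then have "l = i" using disjA[of l i] Ln l iL by blast
    then show False using l gK by simp
  qed
  have Em: "E \<subseteq> {..<m}" unfolding E_def using f(1) Ln by blast
  have KA: "\<And>i. i \<in> L \<Longrightarrow> K i \<subseteq> A i" "\<And>i. i \<in> L \<Longrightarrow> card (K i) = k" using K by auto
  have PE: "P j \<subseteq> E" for j using P_def by auto
  have cardB: "is_cardinal n m k B"
  proof -
    have s1: "\<forall>i<n. B i \<subseteq> {..<m}"
    proof (intro allI impI)
      fix i assume i: "i < n"
      show "B i \<subseteq> {..<m}"
      proof (cases "i \<in> L")
        case True then show ?thesis using B_def KA f(1) i by fastforce
      next
        case False
        have "P i \<subseteq> {..<m}" using PE[of i] Em by blast
        moreover have "A i \<subseteq> {..<m}" using f(1) i by simp
        ultimately show ?thesis using B_def False by simp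
      qed
    qed
    have s2: "\<forall>i<n. \<forall>j<n. i \<noteq> j \<longrightarrow> B i \<inter> B j = {}"
    proof (intro allI impI)
      fix i j assume ij: "i < n" "j < n" "i \<noteq> j"
      have ij': "i \<in> L \<or> i \<in> RT" "j \<in> L \<or> j \<in> RT" using ij LRT by auto
      have dA: "A i \<inter> A j = {}" using disjA ij by simp
      show "B i \<inter> B j = {}"
      proof (cases "i \<in> L")
        case iL: True
        have Bi: "B i = K i" using iL B_def by simp
        have Ki: "K i \<subseteq> A i" using KA(1) iL by simp
        show ?thesis
        proof (cases "j \<in> L")
          case True
          have "B j = K j" using True B_def by simp
          moreover have "K j \<subseteq> A j" using KA(1) True by simp
          ultimately show ?thesis using Bi Ki dA by blast
        next
          case False
          then have jR: "j \<in> RT" using ij' by simp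
          have Bj: "B j = A j \<union> P j" using False B_def by simp
          have "K i \<inter> A j = {}" using Ki dA by blast
          moreover have "K i \<inter> P j = {}" using EnotK[OF _ iL] PE[of j] by blast
          ultimately show ?thesis using Bi Bj by blast
        qed
      next
        case iR': False
        then have iR: "i \<in> RT" using ij' by simp
        have Bi: "B i = A i \<union> P i" using iR' B_def by simp
        show ?thesis
        proof (cases "j \<in> L")
          case jL: True
          have Bj: "B j = K j" using jL B_def by simp
          have Kj: "K j \<subseteq> A j" using KA(1) jL by simp
          have "K j \<inter> A i = {}" using Kj dA by blast
          moreover have "K j \<inter> P i = {}" using EnotK[OF _ jL] PE[of i] by blast
          ultimately show ?thesis using Bi Bj by blast
        next
          case False
          then have jR: "j \<in> RT" using ij' by simp
          have Bj: "B j = A j \<union> P j" using False B_def by simp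
          have "P i \<inter> A j = {}" using EnotRT[OF _ jR] PE[of i] by blast
          moreover have "A i \<inter> P j = {}" using EnotRT[OF _ iR] PE[of j] by blast
          moreover have "P i \<inter> P j = {}" using P_def ij(3) by auto
          ultimately show ?thesis using dA Bi Bj by blast
        qed
      qed
    qed
    have s3: "(\<Union>i<n. B i) = {..<m}"
    proof
      show "(\<Union>i<n. B i) \<subseteq> {..<m}" using s1 by blast
      show "{..<m} \<subseteq> (\<Union>i<n. B i)"
      proof
        fix g assume "g \<in> {..<m}"
        then obtain l where l: "l < n" "g \<in> A l" using f(4) by blast
        show "g \<in> (\<Union>i<n. B i)"
        proof (cases "l \<in> L")
          case lL: True
          show ?thesis
          proof (cases "g \<in> K l")
            case True then show ?thesis using lL l B_def by auto
          next
            case False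
            then have gE: "g \<in> E" using lL l E_def by blast
            then have sR: "\<sigma> g \<in> RT" using \<sigma>(1) by blast
            then have "g \<in> B (\<sigma> g)" using gE B_def P_def LRT by auto
            then show ?thesis using sR Ln by blast
          qed
        next
          case False then show ?thesis using l B_def by auto
        qed
      qed
    qed
    have s4: "\<forall>i<n. card (B i) \<le> k"
    proof (intro allI impI)
      fix i assume i: "i < n"
      show "card (B i) \<le> k"
      proof (cases "i \<in> L")
        case True then show ?thesis using B_def KA by simp
      next
        case False
        then have iR: "i \<in> RT" using i LRT by auto
        have "card (B i) \<le> card (A i) + card (P i)" using False B_def card_Un_le by simp
        also have "card (P i) \<le> s i" using \<sigma>(2) iR P_def by simp
        finally show ?thesis using s_def RTle iR a_def by simp
      qed
    qed
    show ?thesis unfolding is_cardinal_def is_allocation_def using s1 s2 s3 s4 by blast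
  qed

  have finK: "\<And>i. i \<in> L \<Longrightarrow> finite (K i)" using KA(1) finA Ln finite_subset by metis
  have finP: "\<And>j. finite (P j)" using PE finE finite_subset by metis
  have APdisj: "\<And>j. j \<in> RT \<Longrightarrow> A j \<inter> P j = {}" using EnotRT PE by blast
  have sER: "\<sigma> ` E \<subseteq> RT" using \<sigma>(1) by blast
  have USWB: "USW n u B = (\<Sum>i\<in>L. sum (u i) (K i)) + S + (\<Sum>g\<in>E. u (\<sigma> g) g)"
  proof -
    have e1: "USW n u B = (\<Sum>i\<in>L. bundle_util u i (B i)) + (\<Sum>i\<in>RT. bundle_util u i (B i))"
      unfolding USW_def using split[of "\<lambda>i. bundle_util u i (B i)"] by simp
    have e2: "(\<Sum>i\<in>L. bundle_util u i (B i)) = (\<Sum>i\<in>L. sum (u i) (K i))"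
      by (intro sum.cong) (simp_all add: B_def bundle_util_def)
    have e3: "(\<Sum>i\<in>RT. bundle_util u i (B i)) = (\<Sum>i\<in>RT. bundle_util u i (A i) + sum (u i) (P i))"
    proof (intro sum.cong refl)
      fix i assume iR: "i \<in> RT"
      then have "i \<notin> L" using LRT by blast
      then have "B i = A i \<union> P i" using B_def by simp
      then show "bundle_util u i (B i) = bundle_util u i (A i) + sum (u i) (P i)"
        unfolding bundle_util_def using finA Ln iR finP APdisj[OF iR] by (simp add: sum.union_disjoint)
    qed
    have e4: "(\<Sum>i\<in>RT. sum (u i) (P i)) = (\<Sum>g\<in>E. u (\<sigma> g) g)"
    proof -
      have "(\<Sum>i\<in>RT. sum (u i) (P i)) = (\<Sum>i\<in>RT. \<Sum>g\<in>P i. u (\<sigma> g) g)"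
        by (intro sum.cong refl) (simp add: P_def)
      also have "\<dots> = (\<Sum>g\<in>E. u (\<sigma> g) g)" unfolding P_def
        using sum.group[OF finE finL(2) sER, of "\<lambda>g. u (\<sigma> g) g"] by simp
      finally show ?thesis .
    qed
    show ?thesis using e1 e2 e3 e4 S_def by (simp add: sum.distrib)
  qed
  have sig: "(\<Sum>g\<in>E. \<omega> g) \<le> (\<Sum>g\<in>E. u (\<sigma> g) g)"
  proof -
    have "(\<Sum>j\<in>RT. real (s j) * (\<Sum>g\<in>E. u j g)) = (\<Sum>g\<in>E. \<Sum>j\<in>RT. real (s j) * u j g)"
      by (simp add: sum_distrib_left sum.swap[of _ RT E])
    also have "\<dots> = (\<Sum>g\<in>E. real C * \<omega> g)" unfolding \<omega>_def using Cr by simp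
    also have "\<dots> = real C * (\<Sum>g\<in>E. \<omega> g)" by (simp add: sum_distrib_left)
    finally have "real C * (\<Sum>g\<in>E. \<omega> g) \<le> real C * (\<Sum>g\<in>E. u (\<sigma> g) g)"
      using \<sigma>(3) C_def by simp
    then show ?thesis using Cr by simp
  qed
  have SEw: "(\<Sum>g\<in>E. \<omega> g) = (\<Sum>i\<in>L. (\<Sum>g\<in>A i. \<omega> g) - (\<Sum>g\<in>K i. \<omega> g))"
  proof -
    have "(\<Sum>g\<in>E. \<omega> g) = (\<Sum>i\<in>L. \<Sum>g\<in>A i - K i. \<omega> g)" unfolding E_def
      using finL finA Ln disjL by (intro sum.UNION_disjoint) auto
    also have "\<dots> = (\<Sum>i\<in>L. (\<Sum>g\<in>A i. \<omega> g) - (\<Sum>g\<in>K i. \<omega> g))"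
      using finA Ln KA(1) by (intro sum.cong refl sum_diff) auto
    finally show ?thesis .
  qed
  define w where "w i = (\<Sum>g\<in>A i. \<omega> g)" for i
  have per: "w i + real k / real (card (A i)) * (v i - w i) \<le> sum (u i) (K i) + w i - (\<Sum>g\<in>K i. \<omega> g)"
    if iL: "i \<in> L" for i
  proof -
    have "real k / real (card (A i)) * sum (\<lambda>g. u i g - \<omega> g) (A i) \<le> sum (\<lambda>g. u i g - \<omega> g) (K i)"
      using K iL by blast
    then show ?thesis unfolding v_def w_def bundle_util_def by (simp add: sum_subtractf)
  qed
  have USWB2: "S + (\<Sum>i\<in>L. w i + real k / real (card (A i)) * (v i - w i)) \<le> USW n u B"
  proof -
    have "S + (\<Sum>i\<in>L. w i + real k / real (card (A i)) * (v i - w i))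
        \<le> S + (\<Sum>i\<in>L. sum (u i) (K i) + w i - (\<Sum>g\<in>K i. \<omega> g))"
      using per by (simp add: sum_mono)
    also have "\<dots> = (\<Sum>i\<in>L. sum (u i) (K i)) + S + (\<Sum>g\<in>E. \<omega> g)"
      unfolding SEw w_def by (simp add: sum.distrib sum_subtractf algebra_simps)
    also have "\<dots> \<le> USW n u B" using USWB sig by simp
    finally show ?thesis .
  qed

  have w0: "0 \<le> w i" if "i \<in> L" for i
    unfolding w_def using \<omega>0 Am Ln that by (intro sum_nonneg) auto
  have wv: "w i \<le> v i" if "i \<in> L" for i
    unfolding w_def v_def bundle_util_def using \<omega>le Ln that by (intro sum_mono) auto
  have v1: "v i \<le> 1" if "i \<in> L" for i
  proof -
    have "v i \<le> bundle_util u i {..<m}" unfolding v_def bundle_util_def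
      using f(1) Ln that unn by (intro sum_mono2) auto
    then show ?thesis using u1 Ln that by simp
  qed
  have ak: "real k + 1 \<le> real (card (A i))" if "i \<in> L" for i
  proof -
    have "k + 1 \<le> card (A i)" using Lgt that a_def by (metis Suc_eq_plus1 Suc_leI)
    then have "real (k + 1) \<le> real (card (A i))" by (rule of_nat_mono)
    then show ?thesis by simp
  qed
  have Wb: "1 - S \<le> (\<Sum>i\<in>L. w i)"
  proof -
    have inner: "1 - S \<le> (\<Sum>i\<in>L. bundle_util u j (A i))" if jR: "j \<in> RT" for j
    proof -
      have "(\<Sum>i<n. bundle_util u j (A i)) = 1" using alloc_sum[OF al] u1 Ln jR by simp
      then have "(\<Sum>i\<in>L. bundle_util u j (A i)) + (\<Sum>i\<in>RT. bundle_util u j (A i)) = 1"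
        using split[of "\<lambda>i. bundle_util u j (A i)"] by simp
      moreover have "(\<Sum>i\<in>RT. bundle_util u j (A i)) \<le> S" unfolding S_def bundle_util_def
        using dom Ln jR by (intro sum_mono) auto
      ultimately show ?thesis by simp
    qed
    have "(\<Sum>i\<in>L. w i) = (\<Sum>i\<in>L. \<Sum>g\<in>A i. \<Sum>j\<in>RT. real (s j) * u j g) / real C"
      unfolding w_def \<omega>_def by (simp add: sum_divide_distrib)
    also have "(\<Sum>i\<in>L. \<Sum>g\<in>A i. \<Sum>j\<in>RT. real (s j) * u j g)
        = (\<Sum>j\<in>RT. real (s j) * (\<Sum>i\<in>L. bundle_util u j (A i)))"
    proof -
      have "(\<Sum>i\<in>L. \<Sum>g\<in>A i. \<Sum>j\<in>RT. real (s j) * u j g) = (\<Sum>i\<in>L. \<Sum>j\<in>RT. \<Sum>g\<in>A i. real (s j) * u j g)"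
      proof (rule sum.cong[OF refl])
        fix i assume "i \<in> L"
        show "(\<Sum>g\<in>A i. \<Sum>j\<in>RT. real (s j) * u j g) = (\<Sum>j\<in>RT. \<Sum>g\<in>A i. real (s j) * u j g)"
          using sum.swap[of "\<lambda>g j. real (s j) * u j g" RT "A i"] by simp
      qed
      also have "\<dots> = (\<Sum>j\<in>RT. \<Sum>i\<in>L. \<Sum>g\<in>A i. real (s j) * u j g)" by (rule sum.swap)
      also have "\<dots> = (\<Sum>j\<in>RT. real (s j) * (\<Sum>i\<in>L. bundle_util u j (A i)))"
        unfolding bundle_util_def by (simp add: sum_distrib_left)
      finally show ?thesis .
    qed
    finally have eqw: "(\<Sum>i\<in>L. w i) = (\<Sum>j\<in>RT. real (s j) * (\<Sum>i\<in>L. bundle_util u j (A i))) / real C" .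
    have "(\<Sum>j\<in>RT. real (s j) * (1 - S)) \<le> (\<Sum>j\<in>RT. real (s j) * (\<Sum>i\<in>L. bundle_util u j (A i)))"
      using inner by (intro sum_mono mult_left_mono) auto
    moreover have "(\<Sum>j\<in>RT. real (s j) * (1 - S)) = real C * (1 - S)"
      unfolding C_def by (simp add: sum_distrib_right)
    ultimately have "real C * (1 - S) \<le> (\<Sum>j\<in>RT. real (s j) * (\<Sum>i\<in>L. bundle_util u j (A i)))" by simp
    then show ?thesis using eqw Cr by (simp add: le_divide_eq mult.commute)
  qed
  define N where "N = real (\<Sum>i\<in>L. a i)"
  have aN: "(\<Sum>i\<in>L. real (card (A i))) \<le> N" unfolding N_def a_def by simp
  have m1: "real m - 1 > 0" using km k0 by simp
  have NQ: "N - (real k + 1) * (1 - S) \<le> real m - 1"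
  proof (cases "S = 0")
    case True
    have "(\<Sum>i\<in>L. a i) \<le> m" using cardsum by simp
    then have "N \<le> real m" unfolding N_def by (metis of_nat_le_iff)
    then show ?thesis using True by simp
  next
    case False
    have "\<exists>l\<in>RT. A l \<noteq> {}"
    proof (rule ccontr)
      assume "\<not> ?thesis"
      then have "S = 0" unfolding S_def bundle_util_def by simp
      then show False using False by simp
    qed
    then obtain l where l: "l \<in> RT" "A l \<noteq> {}" by blast
    have "0 < a l" using l finA Ln a_def by (simp add: card_gt_0_iff)
    moreover have "a l \<le> (\<Sum>i\<in>RT. a i)" using l finL by (intro member_le_sum) auto
    ultimately have "(\<Sum>i\<in>L. a i) + 1 \<le> m" using cardsum by linarith
    then have "N \<le> real m - 1" unfolding N_def by linarith
    moreover have "0 \<le> (real k + 1) * (1 - S)" using S1 by simp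
    ultimately show ?thesis by linarith
  qed
  have pi: "\<forall>i\<in>L. 0 \<le> w i \<and> w i \<le> v i \<and> v i \<le> 1 \<and> real k + 1 \<le> real (card (A i))"
    using w0 wv v1 ak by blast
  have k0r: "real k > 0" using k0 by simp
  have AB: "1 + real k * (S + (\<Sum>i\<in>L. v i) - 1)^2 / (real m - 1)
      \<le> S + (\<Sum>i\<in>L. (w i + real k / real (card (A i)) * (v i - w i)))"
    by (rule alg_bound[OF finL(1) S0 S1 pi k0r Wb aN NQ m1])
  have cge: "1 + real k * (S + (\<Sum>i\<in>L. v i) - 1)^2 / (real m - 1) \<le> MAX_CARD_USW n m k u"
    using AB USWB2 MAX_CARD_ge[OF cardB, of u] by linarith
  have Ov: "OPT_USW n m u = 1 + (S + (\<Sum>i\<in>L. v i) - 1)" "OPT_USW n m u \<ge> 0"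
    using OPTeq OPT1 USWA by simp_all
  show ?thesis by (rule ratio_bound[OF k0r m1 Ov cge])
qed

end
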